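(* For $k\ge0$ let $\bar H_k\in\mathbb{R}^{p\times p}$ be (random) symmetric matrices with symmetric indefinite factorizations $\bar H_k=P_k^TL_kB_kL_k^TP_k$. Let $\tau_k>0$ be thresholds and let $\underline{\tau}$ be a constant with $0<\underline{\tau}\le\tau_k$ for all $k$. Let $B_k=Q_k\Lambda_kQ_k^T$ be an eigendecomposition with $\Lambda_k=\mathrm{diag}(\lambda_{k1},\dots,\lambda_{kp})$, set $\bar\Lambda_k=\mathrm{diag}(\bar\lambda_{k1},\dots,\bar\lambda_{kp})$ with $\bar\lambda_{kj}=\max\{\tau_k,|\lambda_{kj}|\}$, and $\bar{\bar H}_k=P_k^TL_kQ_k\bar\Lambda_kQ_k^TL_k^TP_k$. Then: (a) $\lambda_{\min}(\bar{\bar H}_k)\ge\underline{\sigma}^2\underline{\tau}>0$; (b) $\bar{\bar H}_k^{-1}$ exists a.s., $c_k^2\bar{\bar H}_k^{-1}\to0$ a.s., and for some constants $\delta,\rho>0$, $\mathbb{E}\big[\|\bar{\bar H}_k^{-1}\|^{2+\delta}\big]\le\rho$.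
   Context: In the factorization $P_k\bar H_kP_k^T=L_kB_kL_k^T$: $P_k$ is a permutation matrix, $B_k$ is block diagonal with symmetric $1\times1$ or $2\times2$ blocks, and $L_k$ is unit lower triangular with entries bounded in magnitude by a fixed constant independent of $k$. $\underline{\sigma}>0$ is a constant, independent of $k$ and of the sample path, with $\sigma_{\min}(L_k)\ge\underline{\sigma}$ for all $k$ (smallest singular value). $\{c_k\}$ is a positive scalar sequence decreasing to $0$ (the perturbation-size gain of the second-order simultaneous-perturbation algorithm). *)

theory Defs
  imports "HOL-Analysis.Analysis" "HOL-Probability.Probability"
begin

text \<open>Square real matrices indexed by a finite linearly ordered type 'p (so p = CARD('p)).\<close>

definition mdiag :: "('p::finite \<Rightarrow> real) \<Rightarrow> real^'p^'p" where
  "mdiag d = (\<chi> i j. if i = j then d i else 0)"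

definition perm_matrix :: "real^'p^'p \<Rightarrow> bool" where
  "perm_matrix P \<longleftrightarrow> (\<exists>\<pi>. \<pi> permutes (UNIV::'p set) \<and>
      P = (\<chi> i j. if \<pi> i = j then 1 else 0))"

definition unit_lower_triangular :: "((real, 'p::{finite,linorder}) vec, 'p) vec \<Rightarrow> bool" where
  "unit_lower_triangular L \<longleftrightarrow> (\<forall>i. L$i$i = 1) \<and> (\<forall>i j. i < j \<longrightarrow> L$i$j = 0)"

definition symmetric_matrix :: "real^'p^'p \<Rightarrow> bool" where
  "symmetric_matrix A \<longleftrightarrow> transpose A = A"

text \<open>Block diagonal with symmetric 1x1 or 2x2 diagonal blocks: the index set is partitioned
  into consecutive blocks of size 1 or 2, and all entries outside the blocks vanish.\<close>
definition block_diag_12 :: "((real, 'p::{finite,linorder}) vec, 'p) vec \<Rightarrow> bool" where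
  "block_diag_12 B \<longleftrightarrow> symmetric_matrix B \<and>
     (\<exists>blocks :: 'p set set.
        (\<forall>i. \<exists>!b. b \<in> blocks \<and> i \<in> b) \<and>
        (\<forall>b\<in>blocks. (card b = 1 \<or> card b = 2) \<and>
                     (\<forall>x y z. x \<in> b \<longrightarrow> z \<in> b \<longrightarrow> x \<le> y \<longrightarrow> y \<le> z \<longrightarrow> y \<in> b)) \<and>
        (\<forall>i j. B$i$j \<noteq> 0 \<longrightarrow> (\<exists>b\<in>blocks. i \<in> b \<and> j \<in> b)))"

definition orthogonal_mat :: "real^'p^'p \<Rightarrow> bool" where
  "orthogonal_mat Q \<longleftrightarrow> transpose Q ** Q = mat 1"

definition is_eigenvalue :: "real^'p^'p \<Rightarrow> real \<Rightarrow> bool" where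
  "is_eigenvalue A \<mu> \<longleftrightarrow> (\<exists>v. v \<noteq> 0 \<and> A *v v = \<mu> *\<^sub>R v)"

definition lambda_min :: "real^'p^'p \<Rightarrow> real" where
  "lambda_min A = Min {\<mu>. is_eigenvalue A \<mu>}"

definition sigma_min :: "real^'p^'p \<Rightarrow> real" where
  "sigma_min A = sqrt (lambda_min (transpose A ** A))"

definition op_norm :: "real^'p^'p \<Rightarrow> real" where
  "op_norm A = onorm (\<lambda>x. A *v x)"

end

theory Submission imports Defs begin

lemma sym_inner:
  fixes A :: "real^'p^'p"
  assumes "symmetric_matrix A"
  shows "x \<bullet> (A *v y) = (A *v x) \<bullet> y"
proof -
  have "x \<bullet> (A *v y) = (x v* A) \<bullet> y" by (simp add: dot_lmul_matrix)
  also have "x v* A = transpose A *v x" by simp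
  also have "transpose A = A" using assms by (simp add: symmetric_matrix_def)
  finally show ?thesis .
qed

lemma quad_expand:
  fixes A :: "real^'p^'p"
  assumes "symmetric_matrix A"
  shows "(x + t *\<^sub>R y) \<bullet> (A *v (x + t *\<^sub>R y)) =
     x \<bullet> (A *v x) + 2 * t * (y \<bullet> (A *v x)) + t^2 * (y \<bullet> (A *v y))"
proof -
  have "x \<bullet> (A *v y) = y \<bullet> (A *v x)" using sym_inner[OF assms, of x y] by (simp add: inner_commute)
  then show ?thesis
    by (simp add: matrix_vector_right_distrib matrix_vector_mult_scaleR inner_add_left inner_add_right
        algebra_simps power2_eq_square)
qed

lemma rayleigh_min:
  fixes A :: "real^'p^'p"
  assumes S: "symmetric_matrix A"
  shows "\<exists>m v. v \<noteq> 0 \<and> A *v v = m *\<^sub>R v \<and> (\<forall>x. m * (x \<bullet> x) \<le> x \<bullet> (A *v x))"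
proof -
  let ?f = "\<lambda>x::real^'p. x \<bullet> (A *v x)"
  have cont: "continuous_on (sphere 0 1) ?f"
    by (intro continuous_intros linear_continuous_on) (auto intro: linear_linear[THEN iffD1] simp: matrix_vector_mul_linear)
  have ne: "sphere (0::real^'p) 1 \<noteq> {}"
  proof -
    have "axis undefined (1::real) \<in> sphere (0::real^'p) 1" by (simp add: norm_axis_1)
    then show ?thesis by blast
  qed
  obtain v where v: "v \<in> sphere 0 1" and vmin: "\<And>y. y \<in> sphere 0 1 \<Longrightarrow> ?f v \<le> ?f y"
    using continuous_attains_inf[OF compact_sphere ne cont] by blast
  define m where "m = ?f v"
  have nv: "norm v = 1" using v by simp
  have vv: "v \<bullet> v = 1" using nv by (simp add: dot_square_norm)
  have q: "m * (x \<bullet> x) \<le> ?f x" for x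
  proof (cases "x = 0")
    case True then show ?thesis by simp
  next
    case False
    let ?u = "x /\<^sub>R norm x"
    have "?u \<in> sphere 0 1" using False by simp
    then have "m \<le> ?f ?u" using vmin m_def by blast
    also have "?f ?u = ?f x / (norm x)^2"
      by (simp add: matrix_vector_mult_scaleR power2_eq_square divide_simps)
    finally have "m * (norm x)^2 \<le> ?f x" using False by (simp add: divide_simps)
    then show ?thesis by (simp add: power2_norm_eq_inner)
  qed
  define r where "r = A *v v - m *\<^sub>R v"
  have rv: "v \<bullet> r = 0" unfolding r_def using vv m_def by (simp add: inner_diff_right)
  have "r = 0"
  proof (rule ccontr)
    assume "r \<noteq> 0"
    define a where "a = r \<bullet> r"
    have apos: "a > 0" using \<open>r \<noteq> 0\<close> a_def by simp
    define b where "b = r \<bullet> (A *v r) - m * a"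
    have b0: "b \<ge> 0" using q[of r] a_def b_def by simp
    have key: "0 \<le> 2 * t * a + t^2 * b" for t
    proof -
      have "m * ((v + t *\<^sub>R r) \<bullet> (v + t *\<^sub>R r)) \<le> ?f (v + t *\<^sub>R r)" by (rule q)
      also have "?f (v + t *\<^sub>R r) = m + 2 * t * (r \<bullet> (A *v v)) + t^2 * (r \<bullet> (A *v r))"
        using quad_expand[OF S] m_def by simp
      also have "r \<bullet> (A *v v) = a"
        unfolding a_def using rv by (simp add: r_def inner_diff_left inner_diff_right inner_commute)
      finally have "m * ((v + t *\<^sub>R r) \<bullet> (v + t *\<^sub>R r)) \<le> m + 2 * t * a + t^2 * (r \<bullet> (A *v r))" .
      moreover have e: "(v + t *\<^sub>R r) \<bullet> (v + t *\<^sub>R r) = 1 + t^2 * a"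
        using vv rv a_def by (simp add: inner_add_left inner_add_right inner_commute power2_eq_square)
      moreover have e2: "r \<bullet> (A *v r) = b + m * a" using b_def by simp
      ultimately have "m * (1 + t^2 * a) \<le> m + 2 * t * a + t^2 * (b + m * a)" by (simp only: e e2)
      then show ?thesis by (simp add: algebra_simps)
    qed
    define t where "t = - a / (b+1)"
    have tneg: "t < 0" using apos b0 t_def by (simp add: divide_neg_pos)
    have "t * b = - a * (b / (b+1))" using t_def by simp
    moreover have "b / (b+1) \<le> 1" using b0 by simp
    ultimately have "t * b \<ge> - a" using apos
      by (metis mult_left_mono_neg mult.right_neutral neg_less_0_iff_less less_imp_le)
    then have "2 * a + t * b > 0" using apos by linarith
    then have "t * (2 * a + t * b) < 0" using tneg by (simp add: mult_neg_pos)
    moreover have "t * (2 * a + t * b) = 2 * t * a + t^2 * b" by (simp add: algebra_simps power2_eq_square)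
    ultimately have "2 * t * a + t^2 * b < 0" by simp
    moreover have "0 \<le> 2 * t * a + t^2 * b" by (rule key)
    finally show False by simp
  qed
  then have "A *v v = m *\<^sub>R v" unfolding r_def by simp
  moreover have "v \<noteq> 0" using nv by auto
  ultimately show ?thesis using q by blast
qed


lemma eig_orth:
  fixes A :: "real^'p^'p"
  assumes S: "symmetric_matrix A" and "A *v v = a *\<^sub>R v" "A *v w = b *\<^sub>R w" "a \<noteq> b"
  shows "v \<bullet> w = 0"
proof -
  have "a * (v \<bullet> w) = (A *v v) \<bullet> w" using assms by simp
  also have "\<dots> = v \<bullet> (A *v w)" by (rule sym_inner[OF S, symmetric])
  also have "\<dots> = b * (v \<bullet> w)" using assms by simp
  finally show ?thesis using assms(4) by simp
qed

lemma eig_finite: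
  fixes A :: "real^'p^'p"
  assumes S: "symmetric_matrix A"
  shows "finite {\<mu>. is_eigenvalue A \<mu>}"
proof -
  let ?S = "{\<mu>. is_eigenvalue A \<mu>}"
  define ev where "ev \<mu> = (SOME v. v \<noteq> 0 \<and> A *v v = \<mu> *\<^sub>R v)" for \<mu>
  have evp: "ev \<mu> \<noteq> 0 \<and> A *v ev \<mu> = \<mu> *\<^sub>R ev \<mu>" if "\<mu> \<in> ?S" for \<mu>
  proof -
    have "\<exists>v. v \<noteq> 0 \<and> A *v v = \<mu> *\<^sub>R v" using that unfolding is_eigenvalue_def by simp
    then show ?thesis unfolding ev_def by (rule someI_ex)
  qed
  have inj: "inj_on ev ?S"
  proof (rule inj_onI)
    fix x y assume xy: "x \<in> ?S" "y \<in> ?S" "ev x = ev y"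
    have "x *\<^sub>R ev x = y *\<^sub>R ev x" using evp[OF xy(1)] evp[OF xy(2)] xy(3) by metis
    moreover have "ev x \<noteq> 0" using evp[OF xy(1)] by simp
    ultimately show "x = y" by (metis scaleR_cancel_right)
  qed
  have "pairwise orthogonal (ev ` ?S)"
  proof (rule pairwiseI)
    fix a b assume ab: "a \<in> ev ` ?S" "b \<in> ev ` ?S" "a \<noteq> b"
    then obtain x y where xy: "x \<in> ?S" "y \<in> ?S" "a = ev x" "b = ev y" by blast
    then have "x \<noteq> y" using ab(3) by blast
    then have "ev x \<bullet> ev y = 0" using evp[OF xy(1)] evp[OF xy(2)] eig_orth[OF S, of "ev x" x "ev y" y] by blast
    then show "orthogonal a b" unfolding orthogonal_def using xy by simp
  qed
  moreover have "0 \<notin> ev ` ?S" using evp by auto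
  ultimately have "independent (ev ` ?S)" by (rule pairwise_orthogonal_independent)
  then have "finite (ev ` ?S)" using independent_bound by blast
  then show ?thesis using inj finite_imageD by blast
qed

lemma lambda_min_ge:
  fixes A :: "real^'p^'p"
  assumes S: "symmetric_matrix A" and q: "\<And>x. c * (x \<bullet> x) \<le> x \<bullet> (A *v x)"
  shows "c \<le> lambda_min A"
proof -
  obtain m v where mv: "v \<noteq> 0" "A *v v = m *\<^sub>R v" using rayleigh_min[OF S] by blast
  have ne: "{\<mu>. is_eigenvalue A \<mu>} \<noteq> {}" using mv unfolding is_eigenvalue_def by blast
  have "c \<le> \<mu>" if ev: "is_eigenvalue A \<mu>" for \<mu>
  proof -
    obtain w where w: "w \<noteq> 0" "A *v w = \<mu> *\<^sub>R w" using ev unfolding is_eigenvalue_def by blast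
    have "w \<bullet> (A *v w) = \<mu> * (w \<bullet> w)" using w(2) by simp
    then have "c * (w \<bullet> w) \<le> \<mu> * (w \<bullet> w)" using q[of w] by linarith
    moreover have "w \<bullet> w > 0" using w(1) by simp
    ultimately show ?thesis by (meson mult_le_cancel_right_pos)
  qed
  then show ?thesis unfolding lambda_min_def using eig_finite[OF S] ne by (subst Min_ge_iff) auto
qed

lemma lambda_min_le:
  fixes A :: "real^'p^'p"
  assumes S: "symmetric_matrix A" and c: "c \<le> lambda_min A"
  shows "c * (x \<bullet> x) \<le> x \<bullet> (A *v x)"
proof -
  obtain m v where mv: "v \<noteq> 0" "A *v v = m *\<^sub>R v" and q: "\<forall>x. m * (x \<bullet> x) \<le> x \<bullet> (A *v x)"
    using rayleigh_min[OF S] by blast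
  have "is_eigenvalue A m" unfolding is_eigenvalue_def using mv by blast
  then have "lambda_min A \<le> m" unfolding lambda_min_def using eig_finite[OF S] by (intro Min_le) auto
  then have "c \<le> m" using c by simp
  moreover have "x \<bullet> x \<ge> 0" by simp
  ultimately have "c * (x \<bullet> x) \<le> m * (x \<bullet> x)" by (rule mult_right_mono)
  then show ?thesis using q by (meson order_trans)
qed


lemma if_mult0: "(if P then a else 0) * (b::real) = (if P then a * b else 0)" by simp

lemma inner_transpose:
  fixes M :: "real^'p^'p"
  shows "x \<bullet> (transpose M *v y) = (M *v x) \<bullet> y"
proof -
  have "x \<bullet> (transpose M *v y) = (x v* transpose M) \<bullet> y" by (rule dot_lmul_matrix[symmetric])
  also have "x v* transpose M = M *v x" by (rule vector_transpose_matrix)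
  finally show ?thesis .
qed

lemma diag_quad:
  fixes z :: "real^'p"
  assumes "\<And>j. t \<le> d j"
  shows "t * (z \<bullet> z) \<le> z \<bullet> (mdiag d *v z)"
proof -
  have "mdiag d *v z = (\<chi> i. d i * z $ i)"
    unfolding mdiag_def matrix_vector_mult_def by (simp add: vec_eq_iff if_mult0)
  then have "z \<bullet> (mdiag d *v z) = (\<Sum>i\<in>UNIV. d i * (z $ i * z $ i))"
    by (simp add: inner_vec_def algebra_simps)
  moreover have "t * (z \<bullet> z) = (\<Sum>i\<in>UNIV. t * (z $ i * z $ i))"
    by (simp add: inner_vec_def sum_distrib_left)
  moreover have "(\<Sum>i\<in>UNIV. t * (z $ i * z $ i)) \<le> (\<Sum>i\<in>UNIV. d i * (z $ i * z $ i))"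
    by (intro sum_mono mult_right_mono assms) simp
  ultimately show ?thesis by simp
qed

lemma transpose_mdiag: "transpose (mdiag d) = mdiag d"
  unfolding mdiag_def transpose_def by (simp add: vec_eq_iff)

lemma orth_norm:
  fixes Q :: "real^'p^'p"
  assumes "orthogonal_mat Q"
  shows "(transpose Q *v y) \<bullet> (transpose Q *v y) = y \<bullet> y"
proof -
  have "Q ** transpose Q = mat 1" using assms unfolding orthogonal_mat_def
    using matrix_left_right_inverse by blast
  have "(transpose Q *v y) \<bullet> (transpose Q *v y) = y \<bullet> (Q *v (transpose Q *v y))"
    using inner_transpose[of "transpose Q *v y" Q y] by (simp add: inner_commute del: transpose_matrix_vector)
  also have "Q *v (transpose Q *v y) = y"
    by (simp only: matrix_vector_mul_assoc \<open>Q ** transpose Q = mat 1\<close> matrix_vector_mul_lid)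
  finally show ?thesis .
qed

lemma perm_norm:
  fixes P :: "real^'p^'p"
  assumes "perm_matrix P"
  shows "(P *v x) \<bullet> (P *v x) = x \<bullet> x"
proof -
  obtain \<pi> where pi: "\<pi> permutes (UNIV::'p set)" and P: "P = (\<chi> i j. if \<pi> i = j then 1 else 0)"
    using assms unfolding perm_matrix_def by blast
  have "P *v x = (\<chi> i. x $ \<pi> i)"
    unfolding P matrix_vector_mult_def by (simp add: vec_eq_iff if_mult0)
  then have "(P *v x) \<bullet> (P *v x) = (\<Sum>i\<in>UNIV. x $ \<pi> i * x $ \<pi> i)" by (simp add: inner_vec_def)
  also have "\<dots> = (\<Sum>i\<in>UNIV. x $ i * x $ i)"
    using sum.permute[OF pi, of "\<lambda>i. x $ i * x $ i"] by (simp add: comp_def)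
  finally show ?thesis by (simp add: inner_vec_def)
qed


lemma lower_norm:
  fixes H :: "real^'p^'p"
  assumes q: "\<And>x. m * (x \<bullet> x) \<le> x \<bullet> (H *v x)"
  shows "m * norm x \<le> norm (H *v x)"
proof (cases "x = 0")
  case True then show ?thesis by simp
next
  case False
  have "m * (norm x * norm x) \<le> norm x * norm (H *v x)"
    using q[of x] norm_cauchy_schwarz[of x "H *v x"] by (simp add: dot_square_norm power2_eq_square)
  then have "norm x * (m * norm x) \<le> norm x * norm (H *v x)" by (simp add: algebra_simps)
  then show ?thesis using False by simp
qed

lemma inj_of_lower:
  fixes H :: "real^'p^'p"
  assumes m: "m > 0" and l: "\<And>x. m * norm x \<le> norm (H *v x)"
  shows "inj ((*v) H)"
proof (rule injI)
  fix x y assume "H *v x = H *v y"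
  then have "H *v (x - y) = 0" by (simp add: matrix_vector_mult_diff_distrib)
  then have "m * norm (x - y) \<le> 0" using l[of "x - y"] by simp
  then have "norm (x - y) = 0" using m by (simp add: mult_le_0_iff)
  then show "x = y" by simp
qed

lemma Lt_bound:
  fixes L :: "real^'p^'p"
  assumes s: "s > 0" and q: "\<And>x. s^2 * (x \<bullet> x) \<le> (L *v x) \<bullet> (L *v x)"
  shows "s^2 * (w \<bullet> w) \<le> (transpose L *v w) \<bullet> (transpose L *v w)"
proof -
  have l: "s * norm x \<le> norm (L *v x)" for x
  proof -
    have "(s * norm x)^2 \<le> (norm (L *v x))^2"
      using q[of x] by (simp add: power_mult_distrib dot_square_norm)
    then show ?thesis by (rule power2_le_imp_le) simp
  qed
  have "inj ((*v) L)" by (rule inj_of_lower[OF s l])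
  then obtain B where "B ** L = mat 1" using matrix_left_invertible_injective by blast
  then have LB: "L ** B = mat 1" using matrix_left_right_inverse by blast
  define z where "z = B *v w"
  have Lz: "L *v z = w" unfolding z_def by (simp add: matrix_vector_mul_assoc LB)
  have nz: "s * norm z \<le> norm w" using l[of z] Lz by simp
  have "w \<bullet> w = w \<bullet> (L *v z)" using Lz by simp
  also have "\<dots> = (transpose L *v w) \<bullet> z"
    using inner_transpose[of w "transpose L" z] by (simp del: transpose_matrix_vector)
  also have "\<dots> \<le> norm (transpose L *v w) * norm z" by (rule norm_cauchy_schwarz)
  finally have "s * (w \<bullet> w) \<le> norm (transpose L *v w) * (s * norm z)"
    using s by (simp add: algebra_simps)
  also have "\<dots> \<le> norm (transpose L *v w) * norm w" using nz by (simp add: mult_left_mono)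
  finally have "s * (norm w * norm w) \<le> norm (transpose L *v w) * norm w"
    by (simp add: dot_square_norm power2_eq_square)
  then have "s * norm w \<le> norm (transpose L *v w)"
    by (cases "w = 0") (auto simp: algebra_simps)
  then have "(s * norm w)^2 \<le> (norm (transpose L *v w))^2"
    using s by (intro power_mono) auto
  then show ?thesis by (simp add: power_mult_distrib dot_square_norm)
qed

lemma posdef_inv:
  fixes H :: "real^'p^'p"
  assumes m: "m > 0" and q: "\<And>x. m * (x \<bullet> x) \<le> x \<bullet> (H *v x)"
  shows "invertible H" "m * norm (matrix_inv H *v y) \<le> norm y"
proof -
  have l: "m * norm x \<le> norm (H *v x)" for x by (rule lower_norm[OF q])
  have "inj ((*v) H)" by (rule inj_of_lower[OF m l])
  then show inv: "invertible H" using matrix_left_invertible_injective invertible_left_inverse by blast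
  have "H ** matrix_inv H = mat 1 \<and> matrix_inv H ** H = mat 1"
    using inv unfolding invertible_def matrix_inv_def by (rule someI_ex)
  then have "H *v (matrix_inv H *v y) = y" by (simp add: matrix_vector_mul_assoc)
  then show "m * norm (matrix_inv H *v y) \<le> norm y" using l[of "matrix_inv H *v y"] by simp
qed


lemma inner_mat:
  fixes M :: "real^'p^'p"
  shows "a \<bullet> (M *v b) = (transpose M *v a) \<bullet> b"
  using inner_transpose[of a "transpose M" b] by (simp del: transpose_matrix_vector)

lemma mat_axis: "((A::real^'p^'p) *v axis j 1) $ i = A $ i $ j"
proof -
  have e: "\<And>x P. (x::real) * (if P then 1 else 0) = (if P then x else 0)" by simp
  show ?thesis by (simp add: matrix_vector_mult_def axis_def e)
qed

lemma sq_le_of_sqrt: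
  assumes "(s::real) > 0" "s \<le> sqrt l"
  shows "s^2 \<le> l"
proof -
  have "sqrt l > 0" using assms by linarith
  then have "l > 0" using real_sqrt_gt_0_iff by blast
  have "s^2 \<le> (sqrt l)^2" using assms by (intro power_mono) auto
  then show ?thesis using \<open>l > 0\<close> by simp
qed

theorem theoremA2:
  fixes M :: "'a measure"
    and Hbar P L B Q :: "nat \<Rightarrow> 'a \<Rightarrow> ((real, 'p::{finite,linorder}) vec, 'p) vec"
    and lam :: "nat \<Rightarrow> 'a \<Rightarrow> 'p \<Rightarrow> real"
    and tau :: "nat \<Rightarrow> 'a \<Rightarrow> real"
    and tau_low sigma_low :: real
    and c :: "nat \<Rightarrow> real"
    and Hbb :: "nat \<Rightarrow> 'a \<Rightarrow> ((real, 'p) vec, 'p) vec"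
  assumes M: "prob_space M"
    and sym: "\<And>k \<omega>. \<omega> \<in> space M \<Longrightarrow> symmetric_matrix (Hbar k \<omega>)"
    and fact: "\<And>k \<omega>. \<omega> \<in> space M \<Longrightarrow>
        Hbar k \<omega> = transpose (P k \<omega>) ** L k \<omega> ** B k \<omega> ** transpose (L k \<omega>) ** P k \<omega>"
    and Pperm: "\<And>k \<omega>. \<omega> \<in> space M \<Longrightarrow> perm_matrix (P k \<omega>)"
    and Bblk: "\<And>k \<omega>. \<omega> \<in> space M \<Longrightarrow> block_diag_12 (B k \<omega>)"
    and Ltri: "\<And>k \<omega>. \<omega> \<in> space M \<Longrightarrow> unit_lower_triangular (L k \<omega>)"
    and Lbnd: "\<exists>C. \<forall>k. \<forall>\<omega>\<in>space M. \<forall>i j. \<bar>L k \<omega> $ i $ j\<bar> \<le> C"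
    and sig_pos: "sigma_low > 0"
    and Lsig: "\<And>k \<omega>. \<omega> \<in> space M \<Longrightarrow> sigma_min (L k \<omega>) \<ge> sigma_low"
    and c_pos: "\<And>k. c k > 0"
    and c_dec: "decseq c"
    and c_lim: "c \<longlonglongrightarrow> 0"
    and tau_pos: "\<And>k \<omega>. \<omega> \<in> space M \<Longrightarrow> tau k \<omega> > 0"
    and tau_low_pos: "tau_low > 0"
    and tau_low: "\<And>k \<omega>. \<omega> \<in> space M \<Longrightarrow> tau_low \<le> tau k \<omega>"
    and Qorth: "\<And>k \<omega>. \<omega> \<in> space M \<Longrightarrow> orthogonal_mat (Q k \<omega>)"
    and eig: "\<And>k \<omega>. \<omega> \<in> space M \<Longrightarrow>
        B k \<omega> = Q k \<omega> ** mdiag (lam k \<omega>) ** transpose (Q k \<omega>)"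
    and Hbb_def: "\<And>k \<omega>. Hbb k \<omega> =
        transpose (P k \<omega>) ** L k \<omega> ** Q k \<omega> **
        mdiag (\<lambda>j. max (tau k \<omega>) \<bar>lam k \<omega> j\<bar>) **
        transpose (Q k \<omega>) ** transpose (L k \<omega>) ** P k \<omega>"
  shows "(\<forall>k. \<forall>\<omega>\<in>space M. lambda_min (Hbb k \<omega>) \<ge> sigma_low\<^sup>2 * tau_low)
         \<and> sigma_low\<^sup>2 * tau_low > 0
         \<and> (AE \<omega> in M. \<forall>k. invertible (Hbb k \<omega>))
         \<and> (AE \<omega> in M. (\<lambda>k. (c k)\<^sup>2 *\<^sub>R matrix_inv (Hbb k \<omega>)) \<longlonglongrightarrow> 0)
         \<and> (\<exists>\<delta> \<rho>. \<delta> > 0 \<and> \<rho> > 0 \<and>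
              (\<forall>k. (\<integral>\<^sup>+ \<omega>. ennreal (op_norm (matrix_inv (Hbb k \<omega>)) powr (2 + \<delta>)) \<partial>M)
                     \<le> ennreal \<rho>))"
proof -
  define m where "m = sigma_low\<^sup>2 * tau_low"
  have mpos: "m > 0" unfolding m_def using sig_pos tau_low_pos by simp
  have quad: "m * (x \<bullet> x) \<le> x \<bullet> (Hbb k \<omega> *v x)" if \<omega>: "\<omega> \<in> space M" for k \<omega> x
  proof -
    define PP where "PP = P k \<omega>"
    define LL where "LL = L k \<omega>"
    define QQ where "QQ = Q k \<omega>"
    define d where "d = (\<lambda>j. max (tau k \<omega>) \<bar>lam k \<omega> j\<bar>)"
    define DD where "DD = mdiag d"
    have symL: "symmetric_matrix (transpose LL ** LL)"
      unfolding symmetric_matrix_def by (simp add: matrix_transpose_mul)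
    have "sigma_low \<le> sqrt (lambda_min (transpose LL ** LL))"
      using Lsig[OF \<omega>] unfolding sigma_min_def LL_def by simp
    then have lm: "sigma_low\<^sup>2 \<le> lambda_min (transpose LL ** LL)" using sig_pos by (rule sq_le_of_sqrt[rotated])
    have Lq: "sigma_low\<^sup>2 * (u \<bullet> u) \<le> (LL *v u) \<bullet> (LL *v u)" for u
    proof -
      have "sigma_low\<^sup>2 * (u \<bullet> u) \<le> u \<bullet> ((transpose LL ** LL) *v u)"
        by (rule lambda_min_le[OF symL lm])
      also have "u \<bullet> ((transpose LL ** LL) *v u) = (LL *v u) \<bullet> (LL *v u)"
        using inner_transpose[of u LL "LL *v u"] by (simp add: matrix_vector_mul_assoc[symmetric] del: transpose_matrix_vector)
      finally show ?thesis .
    qed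
    have Hx: "Hbb k \<omega> *v x = transpose PP *v (LL *v (QQ *v (DD *v (transpose QQ *v (transpose LL *v (PP *v x))))))"
      unfolding Hbb_def PP_def LL_def QQ_def DD_def d_def
      by (simp add: matrix_vector_mul_assoc matrix_mul_assoc del: transpose_matrix_vector)
    define y where "y = transpose LL *v (PP *v x)"
    define z where "z = transpose QQ *v y"
    have "x \<bullet> (Hbb k \<omega> *v x) = z \<bullet> (DD *v z)"
    proof -
      have "x \<bullet> (Hbb k \<omega> *v x) = (PP *v x) \<bullet> (LL *v (QQ *v (DD *v z)))"
        unfolding Hx z_def y_def by (rule inner_transpose)
      also have "\<dots> = y \<bullet> (QQ *v (DD *v z))" unfolding y_def by (rule inner_mat)
      also have "\<dots> = z \<bullet> (DD *v z)" unfolding z_def by (rule inner_mat)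
      finally show ?thesis .
    qed
    moreover have "tau k \<omega> * (z \<bullet> z) \<le> z \<bullet> (DD *v z)"
      unfolding DD_def d_def by (rule diag_quad) simp
    moreover have "tau_low * (z \<bullet> z) \<le> tau k \<omega> * (z \<bullet> z)"
      using tau_low[OF \<omega>] by (intro mult_right_mono) auto
    moreover have "z \<bullet> z = y \<bullet> y" unfolding z_def QQ_def by (rule orth_norm[OF Qorth[OF \<omega>]])
    moreover have "sigma_low\<^sup>2 * ((PP *v x) \<bullet> (PP *v x)) \<le> y \<bullet> y"
      unfolding y_def by (rule Lt_bound[OF sig_pos Lq])
    moreover have "(PP *v x) \<bullet> (PP *v x) = x \<bullet> x" unfolding PP_def by (rule perm_norm[OF Pperm[OF \<omega>]])
    ultimately have "tau_low * (sigma_low\<^sup>2 * (x \<bullet> x)) \<le> x \<bullet> (Hbb k \<omega> *v x)"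
      using tau_low_pos by (smt (verit) mult_left_mono)
    then show ?thesis unfolding m_def by (simp add: algebra_simps)
  qed
  have symH: "symmetric_matrix (Hbb k \<omega>)" for k \<omega>
    unfolding symmetric_matrix_def Hbb_def
    by (simp add: matrix_transpose_mul transpose_mdiag matrix_mul_assoc)
  have A: "\<forall>k. \<forall>\<omega>\<in>space M. lambda_min (Hbb k \<omega>) \<ge> sigma_low\<^sup>2 * tau_low"
    using lambda_min_ge[OF symH quad] m_def by blast
  have inv: "invertible (Hbb k \<omega>)" if "\<omega> \<in> space M" for k \<omega>
    by (rule posdef_inv(1)[OF mpos quad[OF that]])
  have invb: "m * norm (matrix_inv (Hbb k \<omega>) *v y) \<le> norm y" if "\<omega> \<in> space M" for k \<omega> y
    by (rule posdef_inv(2)[OF mpos quad[OF that]])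
  have entry: "\<bar>matrix_inv (Hbb k \<omega>) $ i $ j\<bar> \<le> 1 / m" if "\<omega> \<in> space M" for k \<omega> i j
  proof -
    have "\<bar>matrix_inv (Hbb k \<omega>) $ i $ j\<bar> \<le> norm (matrix_inv (Hbb k \<omega>) *v axis j 1)"
      using component_le_norm_cart[of "matrix_inv (Hbb k \<omega>) *v axis j 1" i] by (simp add: mat_axis)
    moreover have "m * norm (matrix_inv (Hbb k \<omega>) *v axis j 1) \<le> 1"
      using invb[OF that, where y="axis j 1"] by (simp add: norm_axis_1)
    ultimately have "m * \<bar>matrix_inv (Hbb k \<omega>) $ i $ j\<bar> \<le> 1"
      using mpos by (meson mult_left_mono less_imp_le order_trans)
    then show ?thesis using mpos by (simp add: field_simps)
  qed
  have opn: "op_norm (matrix_inv (Hbb k \<omega>)) \<le> 1 / m" if "\<omega> \<in> space M" for k \<omega>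
    unfolding op_norm_def
  proof (rule onorm_le)
    fix y
    show "norm (matrix_inv (Hbb k \<omega>) *v y) \<le> 1 / m * norm y"
      using invb[OF that, where y=y] mpos by (simp add: field_simps)
  qed
  have D: "AE \<omega> in M. (\<lambda>k. (c k)\<^sup>2 *\<^sub>R matrix_inv (Hbb k \<omega>)) \<longlonglongrightarrow> 0"
  proof (rule AE_I2)
    fix \<omega> assume \<omega>: "\<omega> \<in> space M"
    have c2: "(\<lambda>k. (c k)\<^sup>2 * (1 / m)) \<longlonglongrightarrow> 0"
    proof -
      have "(\<lambda>k. (c k)\<^sup>2) \<longlonglongrightarrow> 0" using tendsto_power[OF c_lim, of 2] by simp
      then show ?thesis by (rule tendsto_mult_left_zero)
    qed
    show "(\<lambda>k. (c k)\<^sup>2 *\<^sub>R matrix_inv (Hbb k \<omega>)) \<longlonglongrightarrow> 0"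
    proof (rule vec_tendstoI)
      fix i
      show "(\<lambda>k. ((c k)\<^sup>2 *\<^sub>R matrix_inv (Hbb k \<omega>)) $ i) \<longlonglongrightarrow> 0 $ i"
      proof (rule vec_tendstoI)
        fix j
        show "(\<lambda>k. ((c k)\<^sup>2 *\<^sub>R matrix_inv (Hbb k \<omega>)) $ i $ j) \<longlonglongrightarrow> 0 $ i $ j"
        proof -
          have "(\<lambda>k. (c k)\<^sup>2 * matrix_inv (Hbb k \<omega>) $ i $ j) \<longlonglongrightarrow> 0"
          proof (rule Lim_null_comparison[OF _ c2])
            show "\<forall>\<^sub>F k in sequentially. norm ((c k)\<^sup>2 * matrix_inv (Hbb k \<omega>) $ i $ j) \<le> (c k)\<^sup>2 * (1 / m)"
            proof (rule always_eventually, rule allI)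
              fix k
              have "\<bar>(c k)\<^sup>2 * matrix_inv (Hbb k \<omega>) $ i $ j\<bar> = (c k)\<^sup>2 * \<bar>matrix_inv (Hbb k \<omega>) $ i $ j\<bar>"
                by (simp add: abs_mult)
              also have "\<dots> \<le> (c k)\<^sup>2 * (1 / m)" using entry[OF \<omega>] by (intro mult_left_mono) auto
              finally show "norm ((c k)\<^sup>2 * matrix_inv (Hbb k \<omega>) $ i $ j) \<le> (c k)\<^sup>2 * (1 / m)"
                by simp
            qed
          qed
          then show ?thesis by simp
        qed
      qed
    qed
  qed
  have E: "\<forall>k. (\<integral>\<^sup>+ \<omega>. ennreal (op_norm (matrix_inv (Hbb k \<omega>)) powr (2 + 1)) \<partial>M) \<le> ennreal ((1/m) powr 3 + 1)"
  proof
    fix k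
    have "(\<integral>\<^sup>+ \<omega>. ennreal (op_norm (matrix_inv (Hbb k \<omega>)) powr (2 + 1)) \<partial>M) \<le> (\<integral>\<^sup>+ \<omega>. ennreal ((1/m) powr 3) \<partial>M)"
    proof (rule nn_integral_mono_AE, rule AE_I2)
      fix \<omega> assume \<omega>: "\<omega> \<in> space M"
      have "0 \<le> op_norm (matrix_inv (Hbb k \<omega>))" unfolding op_norm_def
        by (rule onorm_pos_le) simp
      then have "op_norm (matrix_inv (Hbb k \<omega>)) powr (2 + 1) \<le> (1/m) powr 3"
      proof -
        have "op_norm (matrix_inv (Hbb k \<omega>)) powr 3 \<le> (1/m) powr 3"
          by (rule powr_mono2) (use opn[OF \<omega>] \<open>0 \<le> op_norm (matrix_inv (Hbb k \<omega>))\<close> in auto)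
        moreover have "(2 + 1 :: real) = 3" by simp
        ultimately show ?thesis by simp
      qed
      then show "ennreal (op_norm (matrix_inv (Hbb k \<omega>)) powr (2 + 1)) \<le> ennreal ((1/m) powr 3)"
        by (rule ennreal_leI)
    qed
    also have "\<dots> = ennreal ((1/m) powr 3)"
      using prob_space.emeasure_space_1[OF M] by (simp add: nn_integral_const)
    also have "\<dots> \<le> ennreal ((1/m) powr 3 + 1)" by (rule ennreal_leI) simp
    finally show "(\<integral>\<^sup>+ \<omega>. ennreal (op_norm (matrix_inv (Hbb k \<omega>)) powr (2 + 1)) \<partial>M) \<le> ennreal ((1/m) powr 3 + 1)" .
  qed
  have rpos: "(1/m) powr 3 + 1 > (0::real)" by (simp add: add_nonneg_pos)
  have F: "\<exists>\<delta> \<rho>. \<delta> > 0 \<and> \<rho> > 0 \<and>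
              (\<forall>k. (\<integral>\<^sup>+ \<omega>. ennreal (op_norm (matrix_inv (Hbb k \<omega>)) powr (2 + \<delta>)) \<partial>M)
                     \<le> ennreal \<rho>)"
    by (rule exI[of _ "1::real"], rule exI[of _ "(1/m) powr 3 + 1"]) (use E rpos in simp)
  have C: "AE \<omega> in M. \<forall>k. invertible (Hbb k \<omega>)" by (rule AE_I2) (use inv in blast)
  show ?thesis using A mpos m_def C D F by blast
qed

end
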